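(* Let $\Gamma$ be a distance-regular graph with diameter $D\ge3$ and $a_1\ne0$. Let $\sigma_0,\dots,\sigma_D$ and $\rho_0,\dots,\rho_D$ be nontrivial pseudo cosine sequences forming a tight pair, with auxiliary parameter $\varepsilon$. Then for each $i$ with $1\le i\le D-1$ the following are equivalent: (i) $\sigma_{i-1}=\varepsilon\sigma_i$; (ii) $\sigma_{i+1}=\varepsilon\sigma_i$; (iii) $\sigma_{i-1}=\sigma_{i+1}$; (iv) $\rho_i=0$.
   Context: $\Gamma$ is a finite connected undirected graph without loops or multiple edges, distance-regular with diameter $D$, intersection numbers $a_i,b_i,c_i$ ($c_0=0$, $b_D=0$), valency $k$, $c_i+a_i+b_i=k$. For $\theta\in\mathbb{R}$ the pseudo cosine sequence for $\theta$ is the sequence of reals $\sigma_0,\dots,\sigma_D$ with $\sigma_0=1$ and $c_i\sigma_{i-1}+a_i\sigma_i+b_i\sigma_{i+1}=\theta\sigma_i$ for $0\le i\le D-1$; nontrivial means $\sigma_1\ne1$. Pseudo cosine sequences $\sigma_i$, $\rho_i$ form a tight pair if $(\sigma_i\rho_i)_{i=0}^D$ is a pseudo cosine sequence. For a tight pair of nontrivial pseudo cosine sequences, an auxiliary parameter is a real $\varepsilon$ with $\sigma_i\rho_i-\sigma_{i-1}\rho_{i-1}=\varepsilon(\sigma_{i-1}\rho_i-\sigma_i\rho_{i-1})$ for $1\le i\le D$. *)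

theory Defs
  imports Complex_Main
begin

definition simple_graph :: "'a set \<Rightarrow> ('a \<Rightarrow> 'a \<Rightarrow> bool) \<Rightarrow> bool" where
  "simple_graph V E \<longleftrightarrow> finite V \<and> V \<noteq> {} \<and>
     (\<forall>x y. E x y \<longrightarrow> x \<in> V \<and> y \<in> V) \<and>
     (\<forall>x y. E x y \<longrightarrow> E y x) \<and> (\<forall>x. \<not> E x x)"

definition gdist :: "('a \<Rightarrow> 'a \<Rightarrow> bool) \<Rightarrow> 'a \<Rightarrow> 'a \<Rightarrow> nat" where
  "gdist E x y = (LEAST n. (E ^^ n) x y)"

definition connected_graph :: "'a set \<Rightarrow> ('a \<Rightarrow> 'a \<Rightarrow> bool) \<Rightarrow> bool" where
  "connected_graph V E \<longleftrightarrow> (\<forall>x\<in>V. \<forall>y\<in>V. \<exists>n. (E ^^ n) x y)"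

definition diameter :: "'a set \<Rightarrow> ('a \<Rightarrow> 'a \<Rightarrow> bool) \<Rightarrow> nat" where
  "diameter V E = Max {gdist E x y | x y. x \<in> V \<and> y \<in> V}"

text \<open>Gamma = (V,E) is distance-regular with diameter D and intersection numbers
a_i, b_i, c_i (0 \<le> i \<le> D): for all x, y at distance i,
c_i = |Gamma_{i-1}(x) \<inter> Gamma(y)|, a_i = |Gamma_i(x) \<inter> Gamma(y)|,
b_i = |Gamma_{i+1}(x) \<inter> Gamma(y)|; with c_0 = 0 (and b_D = 0 automatically).\<close>
definition distance_regular ::
  "'a set \<Rightarrow> ('a \<Rightarrow> 'a \<Rightarrow> bool) \<Rightarrow> nat \<Rightarrow> (nat \<Rightarrow> nat) \<Rightarrow> (nat \<Rightarrow> nat) \<Rightarrow> (nat \<Rightarrow> nat) \<Rightarrow> bool" where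
  "distance_regular V E D a b c \<longleftrightarrow>
     simple_graph V E \<and> connected_graph V E \<and> diameter V E = D \<and> c 0 = 0 \<and>
     (\<forall>x\<in>V. \<forall>y\<in>V. let i = gdist E x y in
        (i > 0 \<longrightarrow> c i = card {z\<in>V. gdist E x z = i - 1 \<and> E y z}) \<and>
        a i = card {z\<in>V. gdist E x z = i \<and> E y z} \<and>
        b i = card {z\<in>V. gdist E x z = i + 1 \<and> E y z})"

text \<open>Pseudo cosine sequence for theta (only the values sigma_0..sigma_D matter).\<close>
definition pseudo_cosine ::
  "nat \<Rightarrow> (nat \<Rightarrow> nat) \<Rightarrow> (nat \<Rightarrow> nat) \<Rightarrow> (nat \<Rightarrow> nat) \<Rightarrow> real \<Rightarrow> (nat \<Rightarrow> real) \<Rightarrow> bool" where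
  "pseudo_cosine D a b c \<theta> \<sigma> \<longleftrightarrow> \<sigma> 0 = 1 \<and>
     (\<forall>i<D. (if i = 0 then 0 else real (c i) * \<sigma> (i - 1)) + real (a i) * \<sigma> i
             + real (b i) * \<sigma> (i + 1) = \<theta> * \<sigma> i)"

definition is_pseudo_cosine ::
  "nat \<Rightarrow> (nat \<Rightarrow> nat) \<Rightarrow> (nat \<Rightarrow> nat) \<Rightarrow> (nat \<Rightarrow> nat) \<Rightarrow> (nat \<Rightarrow> real) \<Rightarrow> bool" where
  "is_pseudo_cosine D a b c \<sigma> \<longleftrightarrow> (\<exists>\<theta>. pseudo_cosine D a b c \<theta> \<sigma>)"

definition nontrivial_pc ::
  "nat \<Rightarrow> (nat \<Rightarrow> nat) \<Rightarrow> (nat \<Rightarrow> nat) \<Rightarrow> (nat \<Rightarrow> nat) \<Rightarrow> (nat \<Rightarrow> real) \<Rightarrow> bool" where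
  "nontrivial_pc D a b c \<sigma> \<longleftrightarrow> is_pseudo_cosine D a b c \<sigma> \<and> \<sigma> 1 \<noteq> 1"

definition tight_pair ::
  "nat \<Rightarrow> (nat \<Rightarrow> nat) \<Rightarrow> (nat \<Rightarrow> nat) \<Rightarrow> (nat \<Rightarrow> nat) \<Rightarrow> (nat \<Rightarrow> real) \<Rightarrow> (nat \<Rightarrow> real) \<Rightarrow> bool" where
  "tight_pair D a b c \<sigma> \<rho> \<longleftrightarrow> is_pseudo_cosine D a b c \<sigma> \<and> is_pseudo_cosine D a b c \<rho> \<and>
     is_pseudo_cosine D a b c (\<lambda>i. \<sigma> i * \<rho> i)"

definition auxiliary_parameter :: "nat \<Rightarrow> (nat \<Rightarrow> real) \<Rightarrow> (nat \<Rightarrow> real) \<Rightarrow> real \<Rightarrow> bool" where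
  "auxiliary_parameter D \<sigma> \<rho> \<epsilon> \<longleftrightarrow>
     (\<forall>i\<in>{1..D}. \<sigma> i * \<rho> i - \<sigma> (i - 1) * \<rho> (i - 1) =
                 \<epsilon> * (\<sigma> (i - 1) * \<rho> i - \<sigma> i * \<rho> (i - 1)))"

end

theory Submission imports Defs begin


locale grph = fixes V :: "'v set" and E :: "'v \<Rightarrow> 'v \<Rightarrow> bool"
  assumes sg: "simple_graph V E" and cg: "connected_graph V E"
begin

lemma finV: "finite V" using sg unfolding simple_graph_def by blast
lemma Vne: "V \<noteq> {}" using sg unfolding simple_graph_def by blast
lemma symE: "E x y \<Longrightarrow> E y x" using sg unfolding simple_graph_def by blast
lemma irrE: "\<not> E x x" using sg unfolding simple_graph_def by blast
lemma inV1: "E x y \<Longrightarrow> x \<in> V" using sg unfolding simple_graph_def by blast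
lemma inV2: "E x y \<Longrightarrow> y \<in> V" using sg unfolding simple_graph_def by blast

lemma walk_sym: "(E ^^ n) x y \<Longrightarrow> (E ^^ n) y x"
proof (induction n arbitrary: x y)
  case 0 then show ?case by simp
next
  case (Suc n)
  from Suc.prems obtain z where "(E ^^ n) x z" "E z y" by (rule relpowp_Suc_E)
  then have "(E ^^ n) z x" "E y z" using Suc.IH symE by auto
  then show ?case using relpowp_Suc_I2 by metis
qed

lemma walk: "x \<in> V \<Longrightarrow> y \<in> V \<Longrightarrow> (E ^^ gdist E x y) x y"
  unfolding gdist_def using cg unfolding connected_graph_def by (meson LeastI_ex)

lemma dle: "(E ^^ n) x y \<Longrightarrow> gdist E x y \<le> n"
  unfolding gdist_def by (rule Least_le)

lemma dsym: "gdist E x y = gdist E y x"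
  unfolding gdist_def using walk_sym by metis

lemma d0: "gdist E x x = 0" using dle[of 0 x x] by simp

lemma d0_eq: "x \<in> V \<Longrightarrow> y \<in> V \<Longrightarrow> gdist E x y = 0 \<Longrightarrow> x = y"
  using walk[of x y] by simp

lemma tri: "E y z \<Longrightarrow> x \<in> V \<Longrightarrow> gdist E x z \<le> gdist E x y + 1"
proof -
  assume e: "E y z" and x: "x \<in> V"
  have "(E ^^ gdist E x y) x y" using walk[OF x inV1[OF e]] .
  then have "(E ^^ Suc (gdist E x y)) x z" using e by auto
  then show ?thesis using dle by fastforce
qed

lemma tri2: "E y z \<Longrightarrow> x \<in> V \<Longrightarrow> gdist E x y \<le> gdist E x z + 1"
  using tri[of z y x] symE by blast

lemma adj1: "E x y \<Longrightarrow> gdist E x y = 1"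
proof -
  assume e: "E x y"
  have "gdist E x y \<le> 1" using dle[of 1 x y] e by (simp add: relcompp.relcompI)
  moreover have "gdist E x y \<noteq> 0" using d0_eq[OF inV1[OF e] inV2[OF e]] e irrE by blast
  ultimately show ?thesis by simp
qed

lemma step: "x \<in> V \<Longrightarrow> y \<in> V \<Longrightarrow> gdist E x y = Suc n \<Longrightarrow> \<exists>z\<in>V. E z y \<and> gdist E x z = n"
proof -
  assume x: "x \<in> V" and y: "y \<in> V" and d: "gdist E x y = Suc n"
  have "(E ^^ Suc n) x y" using walk[OF x y] d by simp
  then obtain z where w: "(E ^^ n) x z" and e: "E z y" by (rule relpowp_Suc_E)
  have "gdist E x z \<le> n" using dle[OF w] .
  moreover have "gdist E x y \<le> gdist E x z + 1" using tri[OF e x] .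
  ultimately show ?thesis using d e inV1[OF e] by force
qed

lemma exist_aux: "x \<in> V \<Longrightarrow> \<forall>y\<in>V. gdist E x y = n \<longrightarrow> (\<forall>j\<le>n. \<exists>z\<in>V. gdist E x z = j)"
proof (induction n)
  case 0 then show ?case by auto
next
  case (Suc n)
  show ?case
  proof (intro ballI impI allI)
    fix y j assume y: "y \<in> V" and d: "gdist E x y = Suc n" and j: "j \<le> Suc n"
    show "\<exists>z\<in>V. gdist E x z = j"
    proof (cases "j = Suc n")
      case True then show ?thesis using y d by auto
    next
      case False
      obtain z where "z \<in> V" "gdist E x z = n" using step[OF Suc.prems y d] by blast
      then show ?thesis using Suc.IH[OF Suc.prems] j False by auto
    qed
  qed
qed

lemma Dexist: "j \<le> diameter V E \<Longrightarrow> \<exists>x\<in>V. \<exists>y\<in>V. gdist E x y = j"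
proof -
  assume j: "j \<le> diameter V E"
  let ?S = "{gdist E x y | x y. x \<in> V \<and> y \<in> V}"
  have "?S = (\<lambda>(x,y). gdist E x y) ` (V \<times> V)" by auto
  then have fin: "finite ?S" using finV by simp
  have "?S \<noteq> {}" using Vne by auto
  then have "diameter V E \<in> ?S" unfolding diameter_def using fin Max_in by blast
  then obtain x y where xy: "x \<in> V" "y \<in> V" "gdist E x y = diameter V E" by auto
  then show ?thesis using exist_aux[OF xy(1)] j by blast
qed

end

locale drg = fixes V :: "'v set" and E :: "'v \<Rightarrow> 'v \<Rightarrow> bool" and D :: nat
  and a b c :: "nat \<Rightarrow> nat"
  assumes dr: "distance_regular V E D a b c"
begin

sublocale grph V E using dr unfolding distance_regular_def by unfold_locales auto

lemma diam: "diameter V E = D" using dr unfolding distance_regular_def by auto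

lemma drf: "x \<in> V \<Longrightarrow> y \<in> V \<Longrightarrow> gdist E x y = i \<Longrightarrow>
   (i > 0 \<longrightarrow> c i = card {z\<in>V. gdist E x z = i - 1 \<and> E y z}) \<and>
   a i = card {z\<in>V. gdist E x z = i \<and> E y z} \<and>
   b i = card {z\<in>V. gdist E x z = i + 1 \<and> E y z}"
proof -
  assume x: "x \<in> V" and y: "y \<in> V" and d: "gdist E x y = i"
  have "(gdist E x y > 0 \<longrightarrow> c (gdist E x y) = card {z\<in>V. gdist E x z = gdist E x y - 1 \<and> E y z}) \<and>
   a (gdist E x y) = card {z\<in>V. gdist E x z = gdist E x y \<and> E y z} \<and>
   b (gdist E x y) = card {z\<in>V. gdist E x z = gdist E x y + 1 \<and> E y z}"
    using dr x y unfolding distance_regular_def Let_def by blast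
  then show ?thesis using d by simp
qed

lemma pos_card: "w \<in> V \<Longrightarrow> P w \<Longrightarrow> card {z\<in>V. P z} > 0"
  using finV by (subst card_gt_0_iff) auto

lemma a0: "a 0 = 0"
proof -
  obtain x where x: "x \<in> V" using Vne by auto
  have "a 0 = card {z\<in>V. gdist E x z = 0 \<and> E x z}" using drf[OF x x d0] by simp
  also have "{z\<in>V. gdist E x z = 0 \<and> E x z} = {}" using d0_eq[OF x] irrE by blast
  finally show ?thesis by simp
qed

lemma c1: "1 \<le> D \<Longrightarrow> c 1 = 1"
proof -
  assume "1 \<le> D"
  then obtain x y where xy: "x \<in> V" "y \<in> V" "gdist E x y = 1" using Dexist diam by metis
  have "c 1 = card {z\<in>V. gdist E x z = 0 \<and> E y z}" using drf[OF xy] by simp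
  also have "{z\<in>V. gdist E x z = 0 \<and> E y z} = {x}"
  proof -
    have "(E ^^ 1) x y" using walk[OF xy(1,2)] xy(3) by simp
    then have "E y x" using symE by auto
    show ?thesis
    proof (rule set_eqI)
      fix z show "z \<in> {z\<in>V. gdist E x z = 0 \<and> E y z} \<longleftrightarrow> z \<in> {x}"
        using d0_eq[OF xy(1), of z] d0[of x] xy(1) \<open>E y x\<close> by auto
    qed
  qed
  finally show ?thesis by simp
qed

lemma bpos: "j < D \<Longrightarrow> b j > 0"
proof -
  assume j: "j < D"
  then obtain x w where xw: "x \<in> V" "w \<in> V" "gdist E x w = Suc j" using Dexist diam
    by (metis Suc_leI)
  obtain y where y: "y \<in> V" "E y w" "gdist E x y = j" using step[OF xw] by blast
  have "b j = card {z\<in>V. gdist E x z = j + 1 \<and> E y z}" using drf[OF xw(1) y(1) y(3)] by simp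
  then show ?thesis using pos_card[of w] xw y by simp
qed

lemma cpos: "1 \<le> j \<Longrightarrow> j \<le> D \<Longrightarrow> c j > 0"
proof -
  assume j: "1 \<le> j" "j \<le> D"
  then obtain x y where xy: "x \<in> V" "y \<in> V" "gdist E x y = j" using Dexist diam by metis
  obtain n where n: "j = Suc n" using j by (cases j) auto
  obtain z where z: "z \<in> V" "E z y" "gdist E x z = n" using step[OF xy(1,2)] xy(3) n by blast
  have "c j = card {z\<in>V. gdist E x z = j - 1 \<and> E y z}" using drf[OF xy] j by simp
  then show ?thesis using pos_card[of z] z n symE by simp
qed

lemma ksum: "1 \<le> j \<Longrightarrow> j \<le> D \<Longrightarrow> a j + b j + c j = b 0"
proof -
  assume j: "1 \<le> j" "j \<le> D"
  then obtain x y where xy: "x \<in> V" "y \<in> V" "gdist E x y = j" using Dexist diam by metis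
  let ?N = "{z\<in>V. E y z}"
  let ?C = "{z\<in>V. gdist E x z = j - 1 \<and> E y z}"
  let ?A = "{z\<in>V. gdist E x z = j \<and> E y z}"
  let ?B = "{z\<in>V. gdist E x z = j + 1 \<and> E y z}"
  have f: "finite ?A" "finite ?B" "finite ?C" using finV by auto
  have "?N = ?A \<union> ?B \<union> ?C"
  proof (rule set_eqI, rule iffI)
    fix z assume "z \<in> ?N"
    then have "E y z" "z \<in> V" by auto
    then have "gdist E x z \<le> j + 1" "j \<le> gdist E x z + 1" using tri tri2 xy by fastforce+
    then show "z \<in> ?A \<union> ?B \<union> ?C" using \<open>E y z\<close> \<open>z \<in> V\<close> j by auto
  qed auto
  moreover have "card (?A \<union> ?B \<union> ?C) = card (?A \<union> ?B) + card ?C"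
    by (rule card_Un_disjoint) (use f j in auto)
  moreover have "card (?A \<union> ?B) = card ?A + card ?B"
    by (rule card_Un_disjoint) (use f in auto)
  ultimately have "card ?N = card ?A + card ?B + card ?C" by simp
  moreover have "b 0 = card {z\<in>V. gdist E y z = 0 + 1 \<and> E y z}" using drf[OF xy(2) xy(2) d0] by simp
  moreover have "{z\<in>V. gdist E y z = 0 + 1 \<and> E y z} = ?N" using adj1 by auto
  moreover have "c j = card ?C" "a j = card ?A" "b j = card ?B" using drf[OF xy] j by auto
  ultimately show ?thesis by simp
qed

lemma apos: "a 1 \<noteq> 0 \<Longrightarrow> 1 \<le> i \<Longrightarrow> i + 1 \<le> D \<Longrightarrow> a i \<noteq> 0"
proof -
  assume a1: "a 1 \<noteq> 0" and i: "1 \<le> i" "i + 1 \<le> D"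
  then obtain x z where xz: "x \<in> V" "z \<in> V" "gdist E x z = Suc i" using Dexist diam by (metis Suc_eq_plus1)
  obtain y where y: "y \<in> V" "E y z" "gdist E x y = i" using step[OF xz] by blast
  obtain n where n: "i = Suc n" using i by (cases i) auto
  have yx: "gdist E y x = Suc n" using y(3) n dsym by simp
  obtain x1 where x1: "x1 \<in> V" "E x1 x" "gdist E y x1 = n" using step[OF y(1) xz(1) yx] by blast
  have "gdist E x x1 = 1" using adj1 symE x1(2) by blast
  then have "a 1 = card {w\<in>V. gdist E x w = 1 \<and> E x1 w}" using drf[OF xz(1) x1(1)] by simp
  then have "{w\<in>V. gdist E x w = 1 \<and> E x1 w} \<noteq> {}" using a1 by (metis card.empty)
  then obtain t where t: "t \<in> V" "gdist E x t = 1" "E x1 t" by blast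
  have "(E ^^ 1) x t" using walk[OF xz(1) t(1)] t(2) by simp
  then have Ext: "E x t" by auto
  have d1: "gdist E y t \<le> i" using tri[OF t(3) y(1)] x1 n by simp
  have d2: "gdist E y x \<le> gdist E y t + 1" using tri2[OF Ext y(1)] .
  show "a i \<noteq> 0"
  proof (cases "gdist E y t = i")
    case True
    have "a i = card {w\<in>V. gdist E y w = i \<and> E x w}" using drf[OF y(1) xz(1)] yx n by simp
    then show ?thesis using pos_card[of t] t True Ext by simp
  next
    case False
    then have yt: "gdist E y t = n" using d1 d2 yx n by simp
    have zt1: "gdist E t z \<le> gdist E t y + 1" using tri[OF y(2) t(1)] .
    have zt2: "gdist E z x \<le> gdist E z t + 1" using tri2[OF Ext xz(2)] .
    have zt: "gdist E z t = i" using zt1 zt2 yt n xz(3) dsym[of t y] dsym[of t z] dsym[of z x] by simp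
    have zx1a: "gdist E x1 z \<le> gdist E x1 y + 1" using tri[OF y(2) x1(1)] .
    have zx1b: "gdist E z x \<le> gdist E z x1 + 1" using tri2[OF symE[OF x1(2)] xz(2)] .
    have zx1: "gdist E z x1 = i" using zx1a zx1b x1(3) n xz(3) dsym[of x1 y] dsym[of x1 z] dsym[of z x] by simp
    have "a i = card {w\<in>V. gdist E z w = i \<and> E x1 w}" using drf[OF xz(2) x1(1) zx1] by simp
    then show ?thesis using pos_card[of t] t zt by simp
  qed
qed

end


lemma pc_rec: "pseudo_cosine D a b c \<theta> \<sigma> \<Longrightarrow> j < D \<Longrightarrow> 0 < j \<Longrightarrow>
  real (c j) * \<sigma> (j-1) + real (a j) * \<sigma> j + real (b j) * \<sigma> (j+1) = \<theta> * \<sigma> j"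
  unfolding pseudo_cosine_def by (metis less_numeral_extra(3))

lemma pc0: "pseudo_cosine D a b c \<theta> \<sigma> \<Longrightarrow> 0 < D \<Longrightarrow> real (a 0) + real (b 0) * \<sigma> 1 = \<theta>"
proof -
  assume h: "pseudo_cosine D a b c \<theta> \<sigma>" and d: "0 < D"
  have "(if (0::nat) = 0 then 0 else real (c 0) * \<sigma> (0 - 1)) + real (a 0) * \<sigma> 0 + real (b 0) * \<sigma> (0 + 1) = \<theta> * \<sigma> 0"
    using h d unfolding pseudo_cosine_def by blast
  moreover have "\<sigma> 0 = 1" using h unfolding pseudo_cosine_def by blast
  ultimately show ?thesis by simp
qed

lemma pc1: "pseudo_cosine D a b c \<theta> \<sigma> \<Longrightarrow> \<sigma> 0 = 1"
  unfolding pseudo_cosine_def by simp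

lemma auxp: "auxiliary_parameter D \<sigma> \<rho> \<epsilon> \<Longrightarrow> 1 \<le> j \<Longrightarrow> j \<le> D \<Longrightarrow>
  \<sigma> j * \<rho> j - \<sigma> (j - 1) * \<rho> (j - 1) = \<epsilon> * (\<sigma> (j - 1) * \<rho> j - \<sigma> j * \<rho> (j - 1))"
  unfolding auxiliary_parameter_def by auto

context drg begin

lemma nz: "pseudo_cosine D a b c \<theta> \<sigma> \<Longrightarrow> j + 1 \<le> D \<Longrightarrow> \<sigma> j = 0 \<Longrightarrow> \<sigma> (j+1) = 0 \<Longrightarrow> False"
proof (induction j)
  case 0 then show ?case using pc1[OF "0.prems"(1)] by simp
next
  case (Suc j)
  have "real (c (Suc j)) * \<sigma> j + real (a (Suc j)) * \<sigma> (Suc j) + real (b (Suc j)) * \<sigma> (Suc j+1) = \<theta> * \<sigma> (Suc j)"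
    using pc_rec[OF Suc.prems(1), of "Suc j"] Suc.prems(2) by simp
  then have "real (c (Suc j)) * \<sigma> j = 0" using Suc.prems by simp
  moreover have "c (Suc j) > 0" using cpos Suc.prems(2) by simp
  ultimately have "\<sigma> j = 0" by simp
  then show ?case using Suc by simp
qed

lemma no_eps1:
  assumes D3: "D \<ge> 3" and a1: "a 1 \<noteq> 0"
    and ps: "pseudo_cosine D a b c \<theta> \<sigma>" and pr: "pseudo_cosine D a b c \<tau> \<rho>"
    and pp: "pseudo_cosine D a b c \<eta> (\<lambda>i. \<sigma> i * \<rho> i)"
    and nt: "\<sigma> 1 \<noteq> 1" and ax: "auxiliary_parameter D \<sigma> \<rho> 1"
  shows False
proof -
  define k where "k = real (b 0)"
  define A1 where "A1 = real (a 1)"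
  define B1 where "B1 = real (b 1)"
  define A2 where "A2 = real (a 2)"
  define B2 where "B2 = real (b 2)"
  define C2 where "C2 = real (c 2)"
  define x1 where "x1 = \<sigma> 1"
  define x2 where "x2 = \<sigma> 2"
  define x3 where "x3 = \<sigma> 3"
  define y1 where "y1 = \<rho> 1"
  define y2 where "y2 = \<rho> 2"
  define y3 where "y3 = \<rho> 3"
  have s0: "\<sigma> 0 = 1" "\<rho> 0 = 1" using pc1 ps pr by auto
  have kk: "k = 1 + A1 + B1" using ksum[of 1] c1 D3 unfolding k_def A1_def B1_def by simp
  have A1p: "A1 > 0" using a1 unfolding A1_def by simp
  have B1p: "B1 > 0" "B2 > 0" "C2 > 0" using bpos[of 1] bpos[of 2] cpos[of 2] D3 unfolding B1_def B2_def C2_def by auto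
  have A2n: "A2 \<ge> 0" unfolding A2_def by simp
  have kp: "k > 0" using kk A1p B1p by simp
  have th: "\<theta> = k * x1" using pc0[OF ps] D3 a0 unfolding k_def x1_def by simp
  have ta: "\<tau> = k * y1" using pc0[OF pr] D3 a0 unfolding k_def y1_def by simp
  have et: "\<eta> = k * (x1 * y1)" using pc0[OF pp] D3 a0 unfolding k_def x1_def y1_def by simp
  have ax1: "x1 * y1 - 1 = y1 - x1" using auxp[OF ax, of 1] D3 s0 unfolding x1_def y1_def by simp
  have "(x1 - 1) * (y1 + 1) = 0" using ax1 by (simp add: algebra_simps)
  then have y1v: "y1 = -1" using nt unfolding x1_def by simp
  have r1: "1 + A1 * y1 + B1 * y2 = \<tau> * y1" using pc_rec[OF pr, of 1] D3 s0 c1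
    unfolding A1_def B1_def y1_def y2_def by (simp add: numeral_2_eq_2)
  have s1: "1 + A1 * x1 + B1 * x2 = \<theta> * x1" using pc_rec[OF ps, of 1] D3 s0 c1
    unfolding A1_def B1_def x1_def x2_def by (simp add: numeral_2_eq_2)
  have p1: "1 + A1 * (x1*y1) + B1 * (x2*y2) = \<eta> * (x1*y1)" using pc_rec[OF pp, of 1] D3 s0 c1
    unfolding A1_def B1_def x1_def x2_def y1_def y2_def by (simp add: numeral_2_eq_2)
  have by2: "B1 * y2 = B1 + 2 * A1" using r1 y1v ta kk by simp
  have bx2: "B1 * x2 = k * x1^2 - 1 - A1 * x1" using s1 th by (simp add: power2_eq_square)
  have "B1 * (1 - A1 * x1 + B1 * (x2*y2)) = B1 * (k * x1^2)" using p1 y1v et by (simp add: power2_eq_square)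
  then have "B1 - A1*B1*x1 + (B1*x2)*(B1*y2) = k*B1*x1^2" by (simp add: algebra_simps)
  then have "B1 - A1*B1*x1 + (k * x1^2 - 1 - A1 * x1)*(B1 + 2 * A1) = k*B1*x1^2" using by2 bx2 by simp
  then have "2 * A1 * ((x1 - 1) * (k * x1 + 1)) = 0" using kk by (simp add: algebra_simps power2_eq_square)
  then have kx1: "k * x1 = -1" using A1p nt unfolding x1_def by simp
  have ax2: "x2 * y2 - x1 * y1 = x1 * y2 - x2 * y1" using auxp[OF ax, of 2] D3 unfolding x1_def y1_def x2_def y2_def by simp
  have "(x2 - x1) * (y2 + y1) = 0" using ax2 by (simp add: algebra_simps)
  moreover have "y2 + y1 \<noteq> 0"
  proof
    assume "y2 + y1 = 0"
    then have "y2 = 1" using y1v by simp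
    then show False using by2 A1p by simp
  qed
  ultimately have x21: "x2 = x1" by simp
  have s2: "C2 * x1 + A2 * x2 + B2 * x3 = \<theta> * x2" using pc_rec[OF ps, of 2] D3
    unfolding A2_def B2_def C2_def x1_def x2_def x3_def by simp
  have "k * (C2 * x1 + A2 * x1 + B2 * x3) = k * (k * x1 * x1)" using s2 x21 th by simp
  then have "C2 * (k * x1) + A2 * (k * x1) + k * (B2 * x3) = (k * x1) * (k * x1)" by (simp add: algebra_simps)
  then have kbx3: "k * (B2 * x3) = 1 + C2 + A2" using kx1 by simp
  have "B2 * x3 > 0" using kbx3 kp B1p A2n by (simp add: zero_less_mult_iff) (smt (verit) zero_less_mult_iff)
  then have x3p: "x3 > 0" using B1p by (simp add: zero_less_mult_iff)
  have x1n: "x1 < 0"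
  proof (rule ccontr)
    assume "\<not> x1 < 0"
    then have "k * x1 \<ge> 0" using kp by simp
    then show False using kx1 by simp
  qed
  have ax3: "x3 * y3 - x2 * y2 = x2 * y3 - x3 * y2" using auxp[OF ax, of 3] D3 unfolding x3_def y3_def x2_def y2_def by simp
  have "(x3 - x2) * (y3 + y2) = 0" using ax3 by (simp add: algebra_simps)
  then have y3v: "y3 = - y2" using x3p x1n x21 by simp
  have p2: "C2 * (x1*y1) + A2 * (x2*y2) + B2 * (x3*y3) = \<eta> * (x2*y2)" using pc_rec[OF pp, of 2] D3
    unfolding A2_def B2_def C2_def x1_def x2_def x3_def y1_def y2_def y3_def by simp
  have "k * (C2 * (x1*y1) + A2 * (x2*y2) + B2 * (x3*y3)) = k * (\<eta> * (x2*y2))" using p2 by simp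
  then have "- C2 * (k*x1) + A2 * (k*x1) * y2 - (k * (B2 * x3)) * y2 = (k*x1) * (-k*x1) * y2"
    using y1v x21 y3v et by (simp add: algebra_simps)
  then have "C2 - A2 * y2 - (1 + C2 + A2) * y2 = - y2" using kx1 kbx3 by simp
  then have "C2 * (1 - y2) = 2 * A2 * y2" by (simp add: algebra_simps)
  moreover have "y2 > 1"
  proof -
    have "B1 * y2 > B1 * 1" using by2 A1p by simp
    then show ?thesis using B1p by (simp add: mult_less_cancel_left_pos)
  qed
  moreover have "C2 * (1 - y2) < 0" using B1p \<open>y2 > 1\<close> by (simp add: mult_pos_neg)
  moreover have "2 * A2 * y2 \<ge> 0" using A2n \<open>y2 > 1\<close> by simp
  ultimately show False by simp
qed

end

lemma aux_swap: "auxiliary_parameter D \<sigma> \<rho> (-1) \<Longrightarrow> auxiliary_parameter D \<rho> \<sigma> 1"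
  unfolding auxiliary_parameter_def by (auto simp: algebra_simps)

theorem lemma11p1:
  fixes V :: "'v set" and E :: "'v \<Rightarrow> 'v \<Rightarrow> bool" and D :: nat
    and a b c :: "nat \<Rightarrow> nat" and \<sigma> \<rho> :: "nat \<Rightarrow> real" and \<epsilon> :: real and i :: nat
  assumes "distance_regular V E D a b c"
    and "D \<ge> 3" and "a 1 \<noteq> 0"
    and "nontrivial_pc D a b c \<sigma>" and "nontrivial_pc D a b c \<rho>"
    and "tight_pair D a b c \<sigma> \<rho>"
    and "auxiliary_parameter D \<sigma> \<rho> \<epsilon>"
    and "1 \<le> i" and "i \<le> D - 1"
  shows "(\<sigma> (i - 1) = \<epsilon> * \<sigma> i \<longleftrightarrow> \<sigma> (i + 1) = \<epsilon> * \<sigma> i)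
       \<and> (\<sigma> (i + 1) = \<epsilon> * \<sigma> i \<longleftrightarrow> \<sigma> (i - 1) = \<sigma> (i + 1))
       \<and> (\<sigma> (i - 1) = \<sigma> (i + 1) \<longleftrightarrow> \<rho> i = 0)"
proof -
  interpret drg V E D a b c using assms(1) by unfold_locales
  note D3 = assms(2) and a1 = assms(3) and ax = assms(7) and i = assms(8,9)
  obtain \<theta> where ps: "pseudo_cosine D a b c \<theta> \<sigma>" and nts: "\<sigma> 1 \<noteq> 1"
    using assms(4) unfolding nontrivial_pc_def is_pseudo_cosine_def by blast
  obtain \<tau> where pr: "pseudo_cosine D a b c \<tau> \<rho>" and ntr: "\<rho> 1 \<noteq> 1"
    using assms(5) unfolding nontrivial_pc_def is_pseudo_cosine_def by blast
  obtain \<eta> where pp: "pseudo_cosine D a b c \<eta> (\<lambda>i. \<sigma> i * \<rho> i)"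
    using assms(6) unfolding tight_pair_def is_pseudo_cosine_def by blast
  have pp': "pseudo_cosine D a b c \<eta> (\<lambda>i. \<rho> i * \<sigma> i)"
    using pp by (simp add: mult.commute)
  have e1: "\<epsilon> \<noteq> 1" using no_eps1[OF D3 a1 ps pr pp nts] ax by auto
  have e2: "\<epsilon> \<noteq> -1" using no_eps1[OF D3 a1 pr ps pp' ntr] ax aux_swap by auto
  have ee: "1 - \<epsilon> * \<epsilon> \<noteq> 0"
  proof
    assume "1 - \<epsilon> * \<epsilon> = 0"
    then have "(1 - \<epsilon>) * (1 + \<epsilon>) = 0" by (simp add: algebra_simps)
    then show False using e1 e2 by auto
  qed
  define k where "k = real (b 0)"
  define A where "A = real (a i)"
  define B where "B = real (b i)"
  define C where "C = real (c i)"
  define x1 where "x1 = \<sigma> 1"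
  define y1 where "y1 = \<rho> 1"
  define p0 where "p0 = \<sigma> (i - 1)"
  define q where "q = \<sigma> i"
  define p1 where "p1 = \<sigma> (i + 1)"
  define r0 where "r0 = \<rho> (i - 1)"
  define y where "y = \<rho> i"
  define r1 where "r1 = \<rho> (i + 1)"
  have iD: "i < D" "i + 1 \<le> D" using i D3 by auto
  have kk: "A + B + C = k" using ksum[of i] i iD unfolding A_def B_def C_def k_def by simp
  have Ap: "A \<noteq> 0" using apos[OF a1] i iD unfolding A_def by simp
  have Bp: "B > 0" using bpos iD unfolding B_def by simp
  have Cp: "C > 0" using cpos i iD unfolding C_def by simp
  have kp: "k > 0" using bpos[of 0] D3 unfolding k_def by simp
  have th: "\<theta> = k * x1" using pc0[OF ps] D3 a0 unfolding k_def x1_def by simp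
  have ta: "\<tau> = k * y1" using pc0[OF pr] D3 a0 unfolding k_def y1_def by simp
  have et: "\<eta> = k * (x1 * y1)" using pc0[OF pp] D3 a0 unfolding k_def x1_def y1_def by simp
  have eA: "C * p0 + A * q + B * p1 = \<theta> * q" using pc_rec[OF ps, of i] i iD
    unfolding A_def B_def C_def p0_def q_def p1_def by simp
  have eB: "C * r0 + A * y + B * r1 = \<tau> * y" using pc_rec[OF pr, of i] i iD
    unfolding A_def B_def C_def r0_def y_def r1_def by simp
  have eC: "C * (p0 * r0) + A * (q * y) + B * (p1 * r1) = \<eta> * (q * y)" using pc_rec[OF pp, of i] i iD
    unfolding A_def B_def C_def p0_def q_def p1_def r0_def y_def r1_def by simp
  have ax0: "q * y - p0 * r0 = \<epsilon> * (p0 * y - q * r0)" using auxp[OF ax, of i] i iD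
    unfolding p0_def q_def r0_def y_def by simp
  have ax1: "p1 * r1 - q * y = \<epsilon> * (q * r1 - p1 * y)" using auxp[OF ax, of "i+1"] i iD
    unfolding p1_def q_def r1_def y_def by simp
  have nzs0: "\<not> (p0 = 0 \<and> q = 0)" using nz[OF ps, of "i - 1"] i iD unfolding p0_def q_def by auto
  have nzs1: "\<not> (q = 0 \<and> p1 = 0)" using nz[OF ps, of i] i iD unfolding p1_def q_def by auto
  have nzr0: "\<not> (r0 = 0 \<and> y = 0)" using nz[OF pr, of "i - 1"] i iD unfolding r0_def y_def by auto
  have x1n: "x1 \<noteq> 1" "y1 \<noteq> 1" using nts ntr unfolding x1_def y1_def by auto
  have iv_i: "p0 = \<epsilon> * q" if "y = 0"
  proof -
    have "r0 \<noteq> 0" using nzr0 that by auto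
    moreover have "r0 * p0 = r0 * (\<epsilon> * q)" using ax0 that by (simp add: algebra_simps)
    ultimately show ?thesis by simp
  qed
  have iv_ii: "p1 = \<epsilon> * q" if "y = 0"
  proof -
    have "r0 \<noteq> 0" using nzr0 that by auto
    have "r1 \<noteq> 0"
    proof
      assume "r1 = 0"
      then have "C * r0 = 0" using eB that by simp
      then show False using Cp \<open>r0 \<noteq> 0\<close> by simp
    qed
    moreover have "r1 * p1 = r1 * (\<epsilon> * q)" using ax1 that by (simp add: algebra_simps)
    ultimately show ?thesis by simp
  qed
  have i_iv: "y = 0" if "p0 = \<epsilon> * q"
  proof -
    have "q * y * (1 - \<epsilon> * \<epsilon>) = 0" using ax0 that by (simp add: algebra_simps)
    moreover have "q \<noteq> 0" using nzs0 that by auto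
    ultimately show ?thesis using ee by simp
  qed
  have ii_iv: "y = 0" if "p1 = \<epsilon> * q"
  proof -
    have "q * y * (1 - \<epsilon> * \<epsilon>) = 0" using ax1 that by (simp add: algebra_simps)
    moreover have "q \<noteq> 0" using nzs1 that by auto
    ultimately show ?thesis using ee by simp
  qed
  have iii_iv: "y = 0" if h: "p0 = p1"
  proof (rule ccontr)
    assume yn: "y \<noteq> 0"
    show False
    proof (cases "p0 = \<epsilon> * q")
      case True
      then show False using i_iv yn by simp
    next
      case False
      have "y * (q - \<epsilon> * p0) = r0 * (p0 - \<epsilon> * q)" using ax0 by (simp add: algebra_simps)
      moreover have "r1 * (p0 - \<epsilon> * q) = y * (q - \<epsilon> * p0)" using ax1 h by (simp add: algebra_simps)
      ultimately have "r1 * (p0 - \<epsilon> * q) = r0 * (p0 - \<epsilon> * q)" by simp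
      then have rr: "r1 = r0" using False by simp
      define s where "s = B + C"
      have sA: "s * p0 = (\<theta> - A) * q" using eA h unfolding s_def by (simp add: algebra_simps)
      have sB: "s * r0 = (\<tau> - A) * y" using eB rr unfolding s_def by (simp add: algebra_simps)
      have sC: "s * (p0 * r0) = (\<eta> - A) * (q * y)" using eC h rr unfolding s_def by (simp add: algebra_simps)
      have "(\<theta> - A) * (\<tau> - A) * (q * y) = (s * p0) * (s * r0)" using sA sB by simp
      also have "\<dots> = s * (s * (p0 * r0))" by (simp add: algebra_simps)
      also have "\<dots> = s * (\<eta> - A) * (q * y)" using sC by simp
      finally have "((\<theta> - A) * (\<tau> - A) - s * (\<eta> - A)) * (q * y) = 0" by (simp add: algebra_simps)
      moreover have "(\<theta> - A) * (\<tau> - A) - s * (\<eta> - A) = A * k * ((x1 - 1) * (y1 - 1))"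
      proof -
        have sk: "s = k - A" using kk unfolding s_def by simp
        show ?thesis unfolding sk th ta et by (simp add: algebra_simps)
      qed
      ultimately have "A * k * ((x1 - 1) * (y1 - 1)) * (q * y) = 0" by simp
      then have "q = 0" using Ap kp x1n yn by simp
      moreover have "s > 0" using Bp Cp unfolding s_def by simp
      ultimately have "p0 = 0" using sA by simp
      then show False using nzs0 \<open>q = 0\<close> by simp
    qed
  qed
  have "(p0 = \<epsilon> * q \<longleftrightarrow> p1 = \<epsilon> * q) \<and> (p1 = \<epsilon> * q \<longleftrightarrow> p0 = p1) \<and> (p0 = p1 \<longleftrightarrow> y = 0)"
    using iv_i iv_ii i_iv ii_iv iii_iv by metis
  then show ?thesis unfolding p0_def p1_def q_def y_def .
qed

end
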